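(* Let $K\in L^\infty(X\times_YX)$ and let $M\subseteq L^2(X|Y)$ be a countable conditional orthonormal set. Then $\sum_{f\in M}\|K*_Yf\|^2_{L^2(X)}<\infty$.
   Context: $(X,\mu)$ is a probability algebra ($\sigma$-complete Boolean algebra with strictly positive countably additive probability measure, not necessarily separable) and $Y\subseteq X$ a $\sigma$-complete subalgebra with $\nu=\mu|_Y$. $\tilde X,\tilde Y$ are the Stone spaces, $\tilde\mu,\tilde\nu$ the induced Baire–Radon probability measures, $\tilde\pi:\tilde X\to\tilde Y$ the induced continuous surjection; $L^p(X):=L^p(\tilde X,\mathrm{Baire}(\tilde X),\tilde\mu)$, $L^p(Y)\subseteq L^p(X)$ via $g\mapsto g\circ\tilde\pi$. Let $(\mu_y)_{y\in\tilde Y}$ be the canonical disintegration: Radon probability measures on $\tilde X$, $\mu_y$ concentrated on $\tilde\pi^{-1}(y)$, with $\int f\,(g\circ\tilde\pi)\,d\tilde\mu=\int(\int f\,d\mu_y)g\,d\tilde\nu$, so $\mathbb E(f|Y)(y)=\int fd\mu_y$. The relative product $X\times_YX$ is represented by $\tilde X\times\tilde X$ with measure $\int\mu_y\times\mu_y\,d\tilde\nu(y)$. $L^2(X|Y):=\{f\in L^0(X):\mathbb E(|f|^2|Y)<\infty\text{ a.e.}\}$, $\langle f,g\rangle_{X|Y}:=\mathbb E(f\bar g|Y)$, and $(K*_Yf)(x):=\int_{\tilde X}K(x,x')f(x')\,d\mu_{\tilde\pi(x)}(x')$. A set $M\subseteq L^2(X|Y)$ is conditional orthonormal if $\langle f,g\rangle_{X|Y}=0$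 for all distinct $f,g\in M$ and for each $f\in M$ there is $E\in Y$ with $\langle f,f\rangle_{X|Y}=1_E$. *)

theory Defs
  imports "HOL-Probability.Probability"
begin

text \<open>MX is the probability space representing X
(Stone space with its Baire sigma-algebra and induced measure), MY the measure space
representing Y (with nu), pi the factor map, and mu the disintegration kernel y to mu_y.\<close>

definition is_disintegration ::
  "'a measure \<Rightarrow> 'b measure \<Rightarrow> ('a \<Rightarrow> 'b) \<Rightarrow> ('b \<Rightarrow> 'a measure) \<Rightarrow> bool" where
  "is_disintegration MX MY \<pi> \<mu> \<longleftrightarrow>
     prob_space MX \<and>
     \<pi> \<in> measurable MX MY \<and>
     \<mu> \<in> measurable MY (prob_algebra MX) \<and>
     \<comment> \<open>mu_y is concentrated on the fibre over y\<close>
     (\<forall>y\<in>space MY. \<forall>A\<in>sets MX. \<pi> -` {y} \<inter> space MX \<subseteq> A \<longrightarrow> emeasure (\<mu> y) A = 1) \<and>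
     \<comment> \<open>disintegration identity\<close>
     (\<forall>f\<in>borel_measurable MX. \<forall>g\<in>borel_measurable MY.
        (\<integral>\<^sup>+ x. (f x :: ennreal) * g (\<pi> x) \<partial>MX) = (\<integral>\<^sup>+ y. (\<integral>\<^sup>+ x. f x \<partial>\<mu> y) * g y \<partial>MY))"

definition cond_inner ::
  "('b \<Rightarrow> 'a measure) \<Rightarrow> ('a \<Rightarrow> complex) \<Rightarrow> ('a \<Rightarrow> complex) \<Rightarrow> 'b \<Rightarrow> complex" where
  "cond_inner \<mu> f g y = (\<integral> x. f x * cnj (g x) \<partial>\<mu> y)"

definition cond_L2 :: "'a measure \<Rightarrow> 'b measure \<Rightarrow> ('b \<Rightarrow> 'a measure) \<Rightarrow> ('a \<Rightarrow> complex) set" where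
  "cond_L2 MX MY \<mu> = {f. f \<in> borel_measurable MX \<and>
      (AE y in MY. (\<integral>\<^sup>+ x. ennreal ((cmod (f x))\<^sup>2) \<partial>\<mu> y) < \<infinity>)}"

definition cond_orthonormal ::
  "'a measure \<Rightarrow> 'b measure \<Rightarrow> ('b \<Rightarrow> 'a measure) \<Rightarrow> ('a \<Rightarrow> complex) set \<Rightarrow> bool" where
  "cond_orthonormal MX MY \<mu> M \<longleftrightarrow>
     M \<subseteq> cond_L2 MX MY \<mu> \<and>
     (\<forall>f\<in>M. \<forall>g\<in>M. f \<noteq> g \<longrightarrow> (AE y in MY. cond_inner \<mu> f g y = 0)) \<and>
     (\<forall>f\<in>M. \<exists>E\<in>sets MY. AE y in MY. cond_inner \<mu> f f y = indicator E y)"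

definition rel_conv ::
  "('a \<Rightarrow> 'b) \<Rightarrow> ('b \<Rightarrow> 'a measure) \<Rightarrow> ('a \<times> 'a \<Rightarrow> complex) \<Rightarrow> ('a \<Rightarrow> complex) \<Rightarrow> 'a \<Rightarrow> complex" where
  "rel_conv \<pi> \<mu> K f x = (\<integral> x'. K (x, x') * f x' \<partial>\<mu> (\<pi> x))"

text \<open>K in L^infty of the relative product X x_Y X, whose measure is
the integral over nu of mu_y x mu_y: measurable and essentially bounded.\<close>
definition rel_Linfty ::
  "'a measure \<Rightarrow> 'b measure \<Rightarrow> ('b \<Rightarrow> 'a measure) \<Rightarrow> ('a \<times> 'a \<Rightarrow> complex) \<Rightarrow> bool" where
  "rel_Linfty MX MY \<mu> K \<longleftrightarrow> K \<in> borel_measurable (MX \<Otimes>\<^sub>M MX) \<and>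
     (\<exists>C::real. AE y in MY. AE p in (\<mu> y \<Otimes>\<^sub>M \<mu> y). cmod (K p) \<le> C)"

end

theory Submission
  imports Defs "HOL-Probability.Probability"
begin

lemma L2_prod_integrable:
  fixes u w :: "'a \<Rightarrow> complex"
  assumes "u \<in> borel_measurable N" "w \<in> borel_measurable N"
    "integrable N (\<lambda>x. (cmod (u x))\<^sup>2)" "integrable N (\<lambda>x. (cmod (w x))\<^sup>2)"
  shows "integrable N (\<lambda>x. u x * w x)"
proof (rule Bochner_Integration.integrable_bound[where f="\<lambda>x. (cmod (u x))\<^sup>2 + (cmod (w x))\<^sup>2"])
  show "integrable N (\<lambda>x. (cmod (u x))\<^sup>2 + (cmod (w x))\<^sup>2)" using assms by auto
  show "(\<lambda>x. u x * w x) \<in> borel_measurable N" using assms by measurable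
  show "AE x in N. norm (u x * w x) \<le> norm ((cmod (u x))\<^sup>2 + (cmod (w x))\<^sup>2)"
  proof (intro AE_I2)
    fix x
    have "cmod (u x) * cmod (w x) \<le> (cmod (u x))\<^sup>2 + (cmod (w x))\<^sup>2"
    proof -
      have "0 \<le> (cmod (u x) - cmod (w x))\<^sup>2" by simp
      then have "2 * (cmod (u x) * cmod (w x)) \<le> (cmod (u x))\<^sup>2 + (cmod (w x))\<^sup>2"
        by (simp add: power2_diff)
      moreover have "0 \<le> cmod (u x) * cmod (w x)" by simp
      ultimately show ?thesis by linarith
    qed
    then show "norm (u x * w x) \<le> norm ((cmod (u x))\<^sup>2 + (cmod (w x))\<^sup>2)"
      by (simp add: norm_mult)
  qed
qed

lemma cnj_meas[measurable]:
  fixes f :: "'a \<Rightarrow> complex"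
  assumes "f \<in> borel_measurable N"
  shows "(\<lambda>x. cnj (f x)) \<in> borel_measurable N"
  by (rule borel_measurable_continuous_on[OF _ assms]) (intro continuous_intros)

lemma bessel_finite:
  fixes N :: "'a measure" and k :: "'a \<Rightarrow> complex" and F :: "('a \<Rightarrow> complex) set"
  assumes P: "prob_space N" and fin: "finite F"
    and km: "k \<in> borel_measurable N" and kb: "AE x in N. cmod (k x) \<le> C"
    and fm: "\<And>f. f \<in> F \<Longrightarrow> f \<in> borel_measurable N"
    and fi: "\<And>f. f \<in> F \<Longrightarrow> integrable N (\<lambda>x. (cmod (f x))\<^sup>2)"
    and orth: "\<And>f g. f \<in> F \<Longrightarrow> g \<in> F \<Longrightarrow> f \<noteq> g \<Longrightarrow> (\<integral>x. f x * cnj (g x) \<partial>N) = 0"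
    and nrm: "\<And>f. f \<in> F \<Longrightarrow> (\<integral>x. f x * cnj (f x) \<partial>N) = 0 \<or> (\<integral>x. f x * cnj (f x) \<partial>N) = 1"
  shows "(\<Sum>f\<in>F. (cmod (\<integral>x. k x * f x \<partial>N))\<^sup>2) \<le> C\<^sup>2"
proof -
  interpret prob_space N by (rule P)
  have kb2: "AE x in N. (cmod (k x))\<^sup>2 \<le> C\<^sup>2"
    using kb by eventually_elim (simp add: power_mono)
  have ki: "integrable N (\<lambda>x. (cmod (k x))\<^sup>2)"
    by (rule Bochner_Integration.integrable_bound[where f="\<lambda>x. C\<^sup>2"]) (use km kb2 in auto)
  have kC: "(\<integral>x. (cmod (k x))\<^sup>2 \<partial>N) \<le> C\<^sup>2"
  proof -
    have "(\<integral>x. (cmod (k x))\<^sup>2 \<partial>N) \<le> (\<integral>x. C\<^sup>2 \<partial>N)"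
      by (rule integral_mono_AE) (use ki kb2 in auto)
    then show ?thesis by (simp add: prob_space)
  qed
  define c where "c g = (\<integral>x. k x * g x \<partial>N)" for g
  define h where "h x = (\<Sum>g\<in>F. c g * cnj (g x))" for x
  have cfm: "(\<lambda>x. cnj (f x)) \<in> borel_measurable N" if "f \<in> F" for f using fm[OF that] by measurable
  have cfi: "integrable N (\<lambda>x. (cmod (cnj (f x)))\<^sup>2)" if "f \<in> F" for f using fi[OF that] by simp
  have ckm: "(\<lambda>x. cnj (k x)) \<in> borel_measurable N" using km by measurable
  have cki: "integrable N (\<lambda>x. (cmod (cnj (k x)))\<^sup>2)" using ki by simp
  have i1: "integrable N (\<lambda>x. k x * cnj (k x))" by (rule L2_prod_integrable[OF km ckm ki cki])
  have i2: "integrable N (\<lambda>x. k x * g x)" if "g \<in> F" for g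
    by (rule L2_prod_integrable[OF km fm[OF that] ki fi[OF that]])
  have i3: "integrable N (\<lambda>x. cnj (g x) * cnj (k x))" if "g \<in> F" for g
    by (rule L2_prod_integrable[OF cfm[OF that] ckm cfi[OF that] cki])
  have i4: "integrable N (\<lambda>x. cnj (g x) * g' x)" if "g \<in> F" "g' \<in> F" for g g'
    by (rule L2_prod_integrable[OF cfm[OF that(1)] fm[OF that(2)] cfi[OF that(1)] fi[OF that(2)]])
  have zero: "c g = 0" if "g \<in> F" "(\<integral>x. g x * cnj (g x) \<partial>N) = 0" for g
  proof -
    have e: "\<And>x. g x * cnj (g x) = complex_of_real ((cmod (g x))\<^sup>2)" by (simp only: complex_norm_square)
    have "(\<integral>x. g x * cnj (g x) \<partial>N) = (\<integral>x. complex_of_real ((cmod (g x))\<^sup>2) \<partial>N)"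
      by (simp only: e)
    also have "\<dots> = complex_of_real (\<integral>x. (cmod (g x))\<^sup>2 \<partial>N)" by (rule integral_complex_of_real)
    finally have "(\<integral>x. g x * cnj (g x) \<partial>N) = complex_of_real (\<integral>x. (cmod (g x))\<^sup>2 \<partial>N)" .
    with that have "(\<integral>x. (cmod (g x))\<^sup>2 \<partial>N) = 0" by simp
    then have "AE x in N. (cmod (g x))\<^sup>2 = 0"
      using integral_nonneg_eq_0_iff_AE[OF fi[OF that(1)]] by simp
    then have "AE x in N. k x * g x = 0" by eventually_elim simp
    then show ?thesis unfolding c_def by (rule integral_eq_zero_AE)
  qed
  have pw: "(k x - h x) * cnj (k x - h x) =
     k x * cnj (k x) - (\<Sum>g\<in>F. cnj (c g) * (k x * g x)) - (\<Sum>g\<in>F. c g * (cnj (g x) * cnj (k x)))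
     + (\<Sum>g\<in>F. \<Sum>g'\<in>F. c g * cnj (c g') * (cnj (g x) * g' x))" for x
  proof -
    define H where "H = (\<Sum>g\<in>F. cnj (c g) * g x)"
    have ch: "cnj (h x) = H" unfolding h_def H_def by simp
    have "(k x - h x) * cnj (k x - h x) = k x * cnj (k x) - k x * H - h x * cnj (k x) + h x * H"
      using ch by (simp add: algebra_simps)
    moreover have "k x * H = (\<Sum>g\<in>F. cnj (c g) * (k x * g x))"
      unfolding H_def by (simp add: sum_distrib_left mult_ac)
    moreover have "h x * cnj (k x) = (\<Sum>g\<in>F. c g * (cnj (g x) * cnj (k x)))"
      unfolding h_def by (simp add: sum_distrib_left sum_distrib_right mult_ac)
    moreover have "h x * H = (\<Sum>g\<in>F. \<Sum>g'\<in>F. c g * cnj (c g') * (cnj (g x) * g' x))"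
      unfolding h_def H_def by (simp add: sum_product mult_ac, subst sum.swap, simp add: mult_ac)
    ultimately show ?thesis by simp
  qed
  have ia: "integrable N (\<lambda>x. \<Sum>g\<in>F. cnj (c g) * (k x * g x))"
    by (rule Bochner_Integration.integrable_sum, rule Bochner_Integration.integrable_mult_right, erule i2)
  have ib: "integrable N (\<lambda>x. \<Sum>g\<in>F. c g * (cnj (g x) * cnj (k x)))"
    by (rule Bochner_Integration.integrable_sum, rule Bochner_Integration.integrable_mult_right, erule i3)
  have ic: "integrable N (\<lambda>x. \<Sum>g\<in>F. \<Sum>g'\<in>F. c g * cnj (c g') * (cnj (g x) * g' x))"
    by (rule Bochner_Integration.integrable_sum, rule Bochner_Integration.integrable_sum, rule Bochner_Integration.integrable_mult_right, erule (1) i4)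
  have ipair: "(\<integral>x. cnj (g x) * g' x \<partial>N) = cnj (\<integral>x. g x * cnj (g' x) \<partial>N)" for g g'
  proof -
    have "(\<lambda>x. cnj (g x) * g' x) = (\<lambda>x. cnj (g x * cnj (g' x)))" by simp
    then show ?thesis using Bochner_Integration.integral_cnj[of N "\<lambda>x. g x * cnj (g' x)"] by simp
  qed
  have inner: "(\<Sum>g'\<in>F. c g * cnj (c g') * cnj (\<integral>x. g x * cnj (g' x) \<partial>N)) = c g * cnj (c g)"
    if g: "g \<in> F" for g
  proof -
    have "(\<Sum>g'\<in>F. c g * cnj (c g') * cnj (\<integral>x. g x * cnj (g' x) \<partial>N))
        = c g * cnj (c g) * cnj (\<integral>x. g x * cnj (g x) \<partial>N)
          + (\<Sum>g'\<in>F - {g}. c g * cnj (c g') * cnj (\<integral>x. g x * cnj (g' x) \<partial>N))"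
      using g fin by (simp add: sum.remove)
    also have "(\<Sum>g'\<in>F - {g}. c g * cnj (c g') * cnj (\<integral>x. g x * cnj (g' x) \<partial>N)) = 0"
      using orth g by (intro sum.neutral) auto
    also have "c g * cnj (c g) * cnj (\<integral>x. g x * cnj (g x) \<partial>N) = c g * cnj (c g)"
      using nrm[OF g] zero[OF g] by auto
    finally show ?thesis by simp
  qed
  have "(\<integral>x. (k x - h x) * cnj (k x - h x) \<partial>N) =
     (\<integral>x. k x * cnj (k x) \<partial>N) - (\<integral>x. (\<Sum>g\<in>F. cnj (c g) * (k x * g x)) \<partial>N)
      - (\<integral>x. (\<Sum>g\<in>F. c g * (cnj (g x) * cnj (k x))) \<partial>N)
     + (\<integral>x. (\<Sum>g\<in>F. \<Sum>g'\<in>F. c g * cnj (c g') * (cnj (g x) * g' x)) \<partial>N)"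
    unfolding pw using i1 ia ib ic by simp
  also have "\<dots> = (\<integral>x. k x * cnj (k x) \<partial>N) - (\<Sum>g\<in>F. cnj (c g) * c g)
      - (\<Sum>g\<in>F. c g * cnj (c g)) + (\<Sum>g\<in>F. \<Sum>g'\<in>F. c g * cnj (c g') * cnj (\<integral>x. g x * cnj (g' x) \<partial>N))"
  proof -
    have "(\<integral>x. (\<Sum>g\<in>F. cnj (c g) * (k x * g x)) \<partial>N) = (\<Sum>g\<in>F. cnj (c g) * c g)"
      using i2 by (simp add: integral_sum c_def)
    moreover have "(\<integral>x. (\<Sum>g\<in>F. c g * (cnj (g x) * cnj (k x))) \<partial>N) = (\<Sum>g\<in>F. c g * cnj (c g))"
    proof -
      have "(\<integral>x. (\<Sum>g\<in>F. c g * (cnj (g x) * cnj (k x))) \<partial>N) = (\<Sum>g\<in>F. c g * (\<integral>x. cnj (g x) * cnj (k x) \<partial>N))"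
        using i3 by (simp add: integral_sum)
      also have "\<dots> = (\<Sum>g\<in>F. c g * cnj (c g))"
      proof (rule sum.cong[OF refl])
        fix g
        have "(\<lambda>x. cnj (g x) * cnj (k x)) = (\<lambda>x. cnj (k x * g x))" by (simp add: mult.commute)
        then show "c g * (\<integral>x. cnj (g x) * cnj (k x) \<partial>N) = c g * cnj (c g)"
          unfolding c_def using Bochner_Integration.integral_cnj[of N "\<lambda>x. k x * g x"] by simp
      qed
      finally show ?thesis .
    qed
    moreover have "(\<integral>x. (\<Sum>g\<in>F. \<Sum>g'\<in>F. c g * cnj (c g') * (cnj (g x) * g' x)) \<partial>N)
        = (\<Sum>g\<in>F. \<Sum>g'\<in>F. c g * cnj (c g') * cnj (\<integral>x. g x * cnj (g' x) \<partial>N))"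
    proof -
      have "(\<integral>x. (\<Sum>g\<in>F. \<Sum>g'\<in>F. c g * cnj (c g') * (cnj (g x) * g' x)) \<partial>N)
        = (\<Sum>g\<in>F. (\<integral>x. (\<Sum>g'\<in>F. c g * cnj (c g') * (cnj (g x) * g' x)) \<partial>N))"
        by (rule Bochner_Integration.integral_sum) (rule Bochner_Integration.integrable_sum, rule Bochner_Integration.integrable_mult_right, erule (1) i4)
      also have "\<dots> = (\<Sum>g\<in>F. \<Sum>g'\<in>F. c g * cnj (c g') * (\<integral>x. cnj (g x) * g' x \<partial>N))"
      proof (rule sum.cong[OF refl])
        fix g assume "g \<in> F"
        then show "(\<integral>x. (\<Sum>g'\<in>F. c g * cnj (c g') * (cnj (g x) * g' x)) \<partial>N) = (\<Sum>g'\<in>F. c g * cnj (c g') * (\<integral>x. cnj (g x) * g' x \<partial>N))"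
          using i4 by (simp add: integral_sum)
      qed
      finally show ?thesis by (simp only: ipair)
    qed
    ultimately show ?thesis by simp
  qed
  also have "\<dots> = (\<integral>x. k x * cnj (k x) \<partial>N) - (\<Sum>g\<in>F. c g * cnj (c g))"
    using inner by (simp add: mult.commute)
  finally have E: "(\<integral>x. (k x - h x) * cnj (k x - h x) \<partial>N) = (\<integral>x. k x * cnj (k x) \<partial>N) - (\<Sum>g\<in>F. c g * cnj (c g))" .
  have ofr: "(\<integral>x. u x * cnj (u x) \<partial>N) = complex_of_real (\<integral>x. (cmod (u x))\<^sup>2 \<partial>N)" for u :: "'a \<Rightarrow> complex"
  proof -
    have e: "\<And>x. u x * cnj (u x) = complex_of_real ((cmod (u x))\<^sup>2)" by (simp only: complex_norm_square)
    show ?thesis by (simp only: e integral_complex_of_real)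
  qed
  have S: "(\<Sum>g\<in>F. c g * cnj (c g)) = complex_of_real (\<Sum>g\<in>F. (cmod (c g))\<^sup>2)"
    by (simp only: of_real_sum complex_norm_square)
  have "complex_of_real (\<integral>x. (cmod (k x - h x))\<^sup>2 \<partial>N)
      = complex_of_real (\<integral>x. (cmod (k x))\<^sup>2 \<partial>N) - complex_of_real (\<Sum>g\<in>F. (cmod (c g))\<^sup>2)"
    using E unfolding ofr[of "\<lambda>x. k x - h x"] ofr[of k] S .
  then have "(\<integral>x. (cmod (k x - h x))\<^sup>2 \<partial>N) = (\<integral>x. (cmod (k x))\<^sup>2 \<partial>N) - (\<Sum>g\<in>F. (cmod (c g))\<^sup>2)"
    unfolding of_real_diff[symmetric] of_real_eq_iff .
  moreover have "0 \<le> (\<integral>x. (cmod (k x - h x))\<^sup>2 \<partial>N)" by simp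
  ultimately show ?thesis using kC unfolding c_def by simp
qed


lemma integral_measurable_subprob_algebra2':
  fixes f :: "_ \<Rightarrow> _ \<Rightarrow> 'c::{banach, second_countable_topology}"
  assumes f[measurable]: "(\<lambda>(x, y). f x y) \<in> borel_measurable (M \<Otimes>\<^sub>M N)"
  assumes L[measurable]: "L \<in> measurable M (subprob_algebra N)"
  shows "(\<lambda>x. integral\<^sup>L (L x) (f x)) \<in> borel_measurable M"
proof -
  note integral_measurable_subprob_algebra[measurable]
  note measurable_distr2[measurable]
  have "(\<lambda>x. integral\<^sup>L (distr (L x) (M \<Otimes>\<^sub>M N) (\<lambda>y. (x, y))) (\<lambda>(x, y). f x y)) \<in> borel_measurable M"
    by measurable
  then show ?thesis
  proof (rule measurable_cong[THEN iffD1, rotated])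
    fix x assume x: "x \<in> space M"
    have sL: "sets (L x) = sets N"
      using measurable_space[OF L x] by (simp add: space_subprob_algebra)
    have "(\<lambda>y. (x, y)) \<in> measurable N (M \<Otimes>\<^sub>M N)" using x by measurable
    then have m: "(\<lambda>y. (x, y)) \<in> measurable (L x) (M \<Otimes>\<^sub>M N)"
      using measurable_cong_sets[OF sL refl] by blast
    have "integral\<^sup>L (distr (L x) (M \<Otimes>\<^sub>M N) (\<lambda>y. (x, y))) (\<lambda>(x, y). f x y)
        = integral\<^sup>L (L x) (\<lambda>y. (\<lambda>(x, y). f x y) (x, y))"
      by (rule integral_distr[OF m f])
    then show "integral\<^sup>L (distr (L x) (M \<Otimes>\<^sub>M N) (\<lambda>y. (x, y))) (\<lambda>(x, y). f x y) = integral\<^sup>L (L x) (f x)"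
      by simp
  qed
qed

lemma disint_facts:
  assumes D: "is_disintegration MX MY \<pi> \<mu>"
  shows "prob_space MX" "\<pi> \<in> measurable MX MY" "\<mu> \<in> measurable MY (prob_algebra MX)"
    "\<And>f g. f \<in> borel_measurable MX \<Longrightarrow> g \<in> borel_measurable MY \<Longrightarrow>
        (\<integral>\<^sup>+ x. (f x :: ennreal) * g (\<pi> x) \<partial>MX) = (\<integral>\<^sup>+ y. (\<integral>\<^sup>+ x. f x \<partial>\<mu> y) * g y \<partial>MY)"
    "\<And>y. y \<in> space MY \<Longrightarrow> sets (\<mu> y) = sets MX"
    "\<And>y. y \<in> space MY \<Longrightarrow> space (\<mu> y) = space MX"
    "\<And>y. y \<in> space MY \<Longrightarrow> prob_space (\<mu> y)"
proof -
  have D': "prob_space MX" "\<pi> \<in> measurable MX MY" "\<mu> \<in> measurable MY (prob_algebra MX)"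
    "\<forall>f\<in>borel_measurable MX. \<forall>g\<in>borel_measurable MY.
        (\<integral>\<^sup>+ x. (f x :: ennreal) * g (\<pi> x) \<partial>MX) = (\<integral>\<^sup>+ y. (\<integral>\<^sup>+ x. f x \<partial>\<mu> y) * g y \<partial>MY)"
    using D unfolding is_disintegration_def by blast+
  show "prob_space MX" "\<pi> \<in> measurable MX MY" "\<mu> \<in> measurable MY (prob_algebra MX)" by (fact D')+
  show "\<And>f g. f \<in> borel_measurable MX \<Longrightarrow> g \<in> borel_measurable MY \<Longrightarrow>
        (\<integral>\<^sup>+ x. (f x :: ennreal) * g (\<pi> x) \<partial>MX) = (\<integral>\<^sup>+ y. (\<integral>\<^sup>+ x. f x \<partial>\<mu> y) * g y \<partial>MY)"
    using D'(4) by blast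
  fix y assume y: "y \<in> space MY"
  have "\<mu> y \<in> space (prob_algebra MX)" by (rule measurable_space[OF D'(3) y])
  then have S: "sets (\<mu> y) = sets MX" and P: "prob_space (\<mu> y)" unfolding space_prob_algebra by auto
  show "sets (\<mu> y) = sets MX" by (fact S)
  show "space (\<mu> y) = space MX" by (rule sets_eq_imp_space_eq[OF S])
  show "prob_space (\<mu> y)" by (fact P)
qed

lemma disint_nn:
  assumes D: "is_disintegration MX MY \<pi> \<mu>"
    and G: "G \<in> borel_measurable (MX \<Otimes>\<^sub>M MY)"
  shows "(\<integral>\<^sup>+ x. G (x, \<pi> x) \<partial>MX) = (\<integral>\<^sup>+ y. \<integral>\<^sup>+ x. G (x, y) \<partial>\<mu> y \<partial>MY)"
proof -
  note DF = disint_facts[OF D]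
  interpret P: prob_space MX by (rule DF(1))
  have pim[measurable]: "\<pi> \<in> measurable MX MY" by (rule DF(2))
  have mum[measurable]: "\<mu> \<in> measurable MY (subprob_algebra MX)"
    by (rule measurable_prob_algebraD[OF DF(3)])
  have neY: "space MY \<noteq> {}"
    using measurable_space[OF pim] P.not_empty by blast
  define A where "A = distr MX (MX \<Otimes>\<^sub>M MY) (\<lambda>x. (x, \<pi> x))"
  define k where "k y = distr (\<mu> y) (MX \<Otimes>\<^sub>M MY) (\<lambda>x. (x, y))" for y
  define B where "B = MY \<bind> k"
  have km[measurable]: "k \<in> measurable MY (subprob_algebra (MX \<Otimes>\<^sub>M MY))"
    unfolding k_def by (rule measurable_distr2[OF _ mum]) measurable
  have sA: "sets A = sets (MX \<Otimes>\<^sub>M MY)" unfolding A_def by simp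
  have skk: "\<And>y. y \<in> space MY \<Longrightarrow> sets (k y) = sets (MX \<Otimes>\<^sub>M MY)"
    unfolding k_def by (rule sets_distr)
  have sB: "sets B = sets (MX \<Otimes>\<^sub>M MY)" unfolding B_def
    by (rule sets_bind[OF skk neY])
  have AB: "A = B"
  proof (rule measure_eqI_generator_eq[where E="{a \<times> b |a b. a \<in> sets MX \<and> b \<in> sets MY}"
      and \<Omega>="space MX \<times> space MY" and A="\<lambda>i. space MX \<times> space MY"])
    show "Int_stable {a \<times> b |a b. a \<in> sets MX \<and> b \<in> sets MY}" by (rule Int_stable_pair_measure_generator)
    show "{a \<times> b |a b. a \<in> sets MX \<and> b \<in> sets MY} \<subseteq> Pow (space MX \<times> space MY)"
      by (auto dest: sets.sets_into_space)
    show "sets A = sigma_sets (space MX \<times> space MY) {a \<times> b |a b. a \<in> sets MX \<and> b \<in> sets MY}"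
      unfolding sA by (rule sets_pair_measure)
    show "sets B = sigma_sets (space MX \<times> space MY) {a \<times> b |a b. a \<in> sets MX \<and> b \<in> sets MY}"
      unfolding sB by (rule sets_pair_measure)
    show "range (\<lambda>i. space MX \<times> space MY) \<subseteq> {a \<times> b |a b. a \<in> sets MX \<and> b \<in> sets MY}"
      by auto
    show "(\<Union>i. space MX \<times> space MY) = space MX \<times> space MY" by simp
    show "emeasure A (space MX \<times> space MY) \<noteq> \<infinity>" for i
      unfolding A_def by (subst emeasure_distr) (auto simp: space_pair_measure)
    fix X assume "X \<in> {a \<times> b |a b. a \<in> sets MX \<and> b \<in> sets MY}"
    then obtain a b where X: "X = a \<times> b" and a[measurable]: "a \<in> sets MX" and b[measurable]: "b \<in> sets MY" by auto
    have "emeasure A X = emeasure MX ((\<lambda>x. (x, \<pi> x)) -` (a \<times> b) \<inter> space MX)"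
      unfolding A_def X by (rule emeasure_distr) auto
    also have "\<dots> = (\<integral>\<^sup>+ x. indicator a x * indicator b (\<pi> x) \<partial>MX)"
    proof -
      have "(\<lambda>x. (x, \<pi> x)) -` (a \<times> b) \<inter> space MX \<in> sets MX" by measurable
      then have "emeasure MX ((\<lambda>x. (x, \<pi> x)) -` (a \<times> b) \<inter> space MX)
          = (\<integral>\<^sup>+ x. indicator ((\<lambda>x. (x, \<pi> x)) -` (a \<times> b) \<inter> space MX) x \<partial>MX)"
        by simp
      also have "\<dots> = (\<integral>\<^sup>+ x. indicator a x * indicator b (\<pi> x) \<partial>MX)"
        by (rule nn_integral_cong) (auto simp: indicator_def)
      finally show ?thesis .
    qed
    also have "\<dots> = (\<integral>\<^sup>+ y. (\<integral>\<^sup>+ x. indicator a x \<partial>\<mu> y) * indicator b y \<partial>MY)"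
      by (rule DF(4)) auto
    also have "\<dots> = (\<integral>\<^sup>+ y. emeasure (k y) X \<partial>MY)"
    proof (rule nn_integral_cong)
      fix y assume y: "y \<in> space MY"
      have "emeasure (k y) X = emeasure (\<mu> y) ((\<lambda>x. (x, y)) -` (a \<times> b) \<inter> space (\<mu> y))"
        unfolding k_def X using y DF(5,6) by (intro emeasure_distr) (auto simp: measurable_def space_pair_measure)
      also have "\<dots> = emeasure (\<mu> y) a * indicator b y"
        using y DF(5,6) sets.sets_into_space[OF a] by (auto simp: indicator_def)
      also have "\<dots> = (\<integral>\<^sup>+ x. indicator a x \<partial>\<mu> y) * indicator b y"
        using y DF(5) by simp
      finally show "(\<integral>\<^sup>+ x. indicator a x \<partial>\<mu> y) * indicator b y = emeasure (k y) X" by simp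
    qed
    also have "\<dots> = emeasure B X"
      unfolding B_def using X a b by (intro emeasure_bind[symmetric, OF neY km]) auto
    finally show "emeasure A X = emeasure B X" .
  qed
  have "(\<integral>\<^sup>+ x. G (x, \<pi> x) \<partial>MX) = (\<integral>\<^sup>+ p. G p \<partial>A)"
    unfolding A_def using G by (subst nn_integral_distr) auto
  also have "\<dots> = (\<integral>\<^sup>+ p. G p \<partial>B)" by (simp add: AB)
  also have "\<dots> = (\<integral>\<^sup>+ y. \<integral>\<^sup>+ p. G p \<partial>k y \<partial>MY)"
    unfolding B_def using G by (rule nn_integral_bind[OF _ km])
  also have "\<dots> = (\<integral>\<^sup>+ y. \<integral>\<^sup>+ x. G (x, y) \<partial>\<mu> y \<partial>MY)"
  proof (rule nn_integral_cong)
    fix y assume y: "y \<in> space MY"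
    show "(\<integral>\<^sup>+ p. G p \<partial>k y) = (\<integral>\<^sup>+ x. G (x, y) \<partial>\<mu> y)"
    proof -
      have "(\<lambda>x. (x, y)) \<in> measurable MX (MX \<Otimes>\<^sub>M MY)" using y by measurable
      then have m: "(\<lambda>x. (x, y)) \<in> measurable (\<mu> y) (MX \<Otimes>\<^sub>M MY)"
        using measurable_cong_sets[OF DF(5)[OF y] refl] by blast
      show ?thesis unfolding k_def by (rule nn_integral_distr[OF m]) (use G measurable_cong_sets[OF sets_distr refl] in blast)
    qed
  qed
  finally show ?thesis .
qed


theorem lemmaA2:
  fixes MX :: "'a measure" and MY :: "'b measure" and \<pi> :: "'a \<Rightarrow> 'b"
    and \<mu> :: "'b \<Rightarrow> 'a measure" and K :: "'a \<times> 'a \<Rightarrow> complex"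
    and M :: "('a \<Rightarrow> complex) set"
  assumes "is_disintegration MX MY \<pi> \<mu>"
    and "rel_Linfty MX MY \<mu> K"
    and "countable M"
    and "cond_orthonormal MX MY \<mu> M"
  shows "(\<Sum>\<^sub>\<infinity> f\<in>M. \<integral>\<^sup>+ x. ennreal ((cmod (rel_conv \<pi> \<mu> K f x))\<^sup>2) \<partial>MX) < \<infinity>"
proof -
  note DF = disint_facts[OF assms(1)]
  interpret PX: prob_space MX by (rule DF(1))
  have pim[measurable]: "\<pi> \<in> measurable MX MY" by (rule DF(2))
  have mum[measurable]: "\<mu> \<in> measurable MY (subprob_algebra MX)"
    by (rule measurable_prob_algebraD[OF DF(3)])
  obtain C where Km[measurable]: "K \<in> borel_measurable (MX \<Otimes>\<^sub>M MX)"
    and KC: "AE y in MY. AE p in (\<mu> y \<Otimes>\<^sub>M \<mu> y). cmod (K p) \<le> C"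
    using assms(2) unfolding rel_Linfty_def by blast
  have Msub: "M \<subseteq> cond_L2 MX MY \<mu>"
    and orth: "\<forall>f\<in>M. \<forall>g\<in>M. f \<noteq> g \<longrightarrow> (AE y in MY. cond_inner \<mu> f g y = 0)"
    and nrmE: "\<forall>f\<in>M. \<exists>E\<in>sets MY. AE y in MY. cond_inner \<mu> f f y = indicator E y"
    using assms(4) unfolding cond_orthonormal_def by blast+
  have fm: "f \<in> borel_measurable MX" if "f \<in> M" for f
    using Msub that unfolding cond_L2_def by blast
  have fL2: "AE y in MY. (\<integral>\<^sup>+ x. ennreal ((cmod (f x))\<^sup>2) \<partial>\<mu> y) < \<infinity>" if "f \<in> M" for f
    using Msub that unfolding cond_L2_def by blast
  define G where "G f p = ennreal ((cmod (\<integral>x'. K (fst p, x') * f x' \<partial>\<mu> (snd p)))\<^sup>2)" for f p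
  have Gm: "G f \<in> borel_measurable (MX \<Otimes>\<^sub>M MY)" if f: "f \<in> M" for f
  proof -
    note fm[OF f, measurable]
    have "(\<lambda>p. \<integral>x'. K (fst p, x') * f x' \<partial>\<mu> (snd p)) \<in> borel_measurable (MX \<Otimes>\<^sub>M MY)"
    proof (rule integral_measurable_subprob_algebra2'[where f="\<lambda>p x'. K (fst p, x') * f x'" and L="\<lambda>p. \<mu> (snd p)" and N=MX])
      show "(\<lambda>(p, x'). K (fst p, x') * f x') \<in> borel_measurable ((MX \<Otimes>\<^sub>M MY) \<Otimes>\<^sub>M MX)"
        by measurable
      show "(\<lambda>p. \<mu> (snd p)) \<in> MX \<Otimes>\<^sub>M MY \<rightarrow>\<^sub>M subprob_algebra MX"
        by (rule measurable_compose[OF measurable_snd mum])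
    qed
    then show ?thesis unfolding G_def by measurable
  qed
  have conv: "ennreal ((cmod (rel_conv \<pi> \<mu> K f x))\<^sup>2) = G f (x, \<pi> x)" for f x
    by (simp add: rel_conv_def G_def)
  have MY1: "emeasure MY (space MY) = 1"
  proof -
    have "(\<integral>\<^sup>+ x. (\<lambda>p. 1::ennreal) (x, \<pi> x) \<partial>MX) = (\<integral>\<^sup>+ y. \<integral>\<^sup>+ x. (\<lambda>p. 1::ennreal) (x, y) \<partial>\<mu> y \<partial>MY)"
      by (rule disint_nn[OF assms(1)]) simp
    also have "\<dots> = (\<integral>\<^sup>+ y. 1 \<partial>MY)"
    proof (rule nn_integral_cong)
      fix y assume y: "y \<in> space MY"
      interpret Py: prob_space "\<mu> y" by (rule DF(7)[OF y])
      show "(\<integral>\<^sup>+ x. (\<lambda>p. 1::ennreal) (x, y) \<partial>\<mu> y) = 1" by (simp add: Py.emeasure_space_1)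
    qed
    finally show ?thesis by (simp add: PX.emeasure_space_1)
  qed
  have bound: "(\<Sum>\<^sub>\<infinity> f\<in>M. \<integral>\<^sup>+ x. ennreal ((cmod (rel_conv \<pi> \<mu> K f x))\<^sup>2) \<partial>MX) \<le> ennreal (C\<^sup>2)"
  proof (rule infsum_le_finite_sums)
    show "(\<lambda>f. \<integral>\<^sup>+ x. ennreal ((cmod (rel_conv \<pi> \<mu> K f x))\<^sup>2) \<partial>MX) summable_on M"
      by (rule nonneg_summable_on_complete) simp
    fix F assume F: "finite F" "F \<subseteq> M"
    have GFm: "(\<lambda>p. \<Sum>f\<in>F. G f p) \<in> borel_measurable (MX \<Otimes>\<^sub>M MY)"
      using F Gm by (intro borel_measurable_sum) auto
    have A1: "AE y in MY. \<forall>f\<in>F. (\<integral>\<^sup>+ x. ennreal ((cmod (f x))\<^sup>2) \<partial>\<mu> y) < \<infinity>"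
      using F fL2 by (intro AE_finite_allI) auto
    have A2: "AE y in MY. \<forall>f\<in>F. \<forall>g\<in>F. f \<noteq> g \<longrightarrow> cond_inner \<mu> f g y = 0"
    proof (intro AE_finite_allI[OF F(1)])
      fix f g assume fg: "f \<in> F" "g \<in> F"
      show "AE y in MY. f \<noteq> g \<longrightarrow> cond_inner \<mu> f g y = 0"
      proof (cases "f = g")
        case True then show ?thesis by simp
      next
        case False
        then have "AE y in MY. cond_inner \<mu> f g y = 0" using orth fg F(2) by blast
        then show ?thesis by (rule eventually_mono) simp
      qed
    qed
    have A3: "AE y in MY. \<forall>f\<in>F. cond_inner \<mu> f f y = 0 \<or> cond_inner \<mu> f f y = 1"
    proof (intro AE_finite_allI[OF F(1)])
      fix f assume "f \<in> F"
      then obtain E where "AE y in MY. cond_inner \<mu> f f y = indicator E y" using nrmE F(2) by blast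
      then show "AE y in MY. cond_inner \<mu> f f y = 0 \<or> cond_inner \<mu> f f y = 1"
        by (rule eventually_mono) (simp add: indicator_def)
    qed
    have AEy: "AE y in MY. (\<integral>\<^sup>+ x. (\<Sum>f\<in>F. G f (x, y)) \<partial>\<mu> y) \<le> ennreal (C\<^sup>2)"
      using AE_space KC A1 A2 A3
    proof eventually_elim
      case (elim y)
      then have y: "y \<in> space MY"
        and Ky: "AE p in (\<mu> y \<Otimes>\<^sub>M \<mu> y). cmod (K p) \<le> C"
        and L2y: "\<forall>f\<in>F. (\<integral>\<^sup>+ x. ennreal ((cmod (f x))\<^sup>2) \<partial>\<mu> y) < \<infinity>"
        and Oy: "\<forall>f\<in>F. \<forall>g\<in>F. f \<noteq> g \<longrightarrow> cond_inner \<mu> f g y = 0"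
        and Ny: "\<forall>f\<in>F. cond_inner \<mu> f f y = 0 \<or> cond_inner \<mu> f f y = 1"
        by auto
      have Py: "prob_space (\<mu> y)" by (rule DF(7)[OF y])
      interpret Py: prob_space "\<mu> y" by (rule Py)
      interpret Q: pair_sigma_finite "\<mu> y" "\<mu> y"
        unfolding pair_sigma_finite_def using prob_space_imp_sigma_finite[OF Py] by simp
      have sy: "sets (\<mu> y) = sets MX" by (rule DF(5)[OF y])
      have spy: "space (\<mu> y) = space MX" by (rule DF(6)[OF y])
      have AEx: "AE x in \<mu> y. AE x' in \<mu> y. cmod (K (x, x')) \<le> C"
        using Q.AE_pair[OF Ky] by simp
      have "AE x in \<mu> y. (\<Sum>f\<in>F. G f (x, y)) \<le> ennreal (C\<^sup>2)"
        using AEx AE_space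
      proof eventually_elim
        case (elim x)
        then have x: "x \<in> space MX" using spy by simp
        have km: "(\<lambda>x'. K (x, x')) \<in> borel_measurable (\<mu> y)"
        proof -
          have "(\<lambda>x'. K (x, x')) \<in> borel_measurable MX" using x by measurable
          then show ?thesis using measurable_cong_sets[OF sy refl] by blast
        qed
        have fmy: "f \<in> borel_measurable (\<mu> y)" if "f \<in> F" for f
          using fm[of f] that F(2) measurable_cong_sets[OF sy refl] by blast
        have fiy: "integrable (\<mu> y) (\<lambda>x. (cmod (f x))\<^sup>2)" if "f \<in> F" for f
        proof -
          have "(\<lambda>x. (cmod (f x))\<^sup>2) \<in> borel_measurable (\<mu> y)" using fmy[OF that] by measurable
          moreover have "(\<integral>\<^sup>+ x. ennreal (norm ((cmod (f x))\<^sup>2)) \<partial>\<mu> y) < \<infinity>"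
            using L2y that by simp
          ultimately show ?thesis by (simp add: integrable_iff_bounded)
        qed
        have bes: "(\<Sum>f\<in>F. (cmod (\<integral>x'. K (x, x') * f x' \<partial>\<mu> y))\<^sup>2) \<le> C\<^sup>2"
        proof (rule bessel_finite[OF Py F(1) km elim(1) fmy fiy])
          show "\<And>f g. f \<in> F \<Longrightarrow> g \<in> F \<Longrightarrow> f \<noteq> g \<Longrightarrow> (\<integral>x. f x * cnj (g x) \<partial>\<mu> y) = 0"
            using Oy unfolding cond_inner_def by blast
          show "\<And>f. f \<in> F \<Longrightarrow> (\<integral>x. f x * cnj (f x) \<partial>\<mu> y) = 0 \<or> (\<integral>x. f x * cnj (f x) \<partial>\<mu> y) = 1"
            using Ny unfolding cond_inner_def by blast
        qed (assumption)+
        have "(\<Sum>f\<in>F. G f (x, y)) = ennreal (\<Sum>f\<in>F. (cmod (\<integral>x'. K (x, x') * f x' \<partial>\<mu> y))\<^sup>2)"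
          unfolding G_def by (subst sum_ennreal) auto
        then show ?case using bes by (simp add: ennreal_leI)
      qed
      then have "(\<integral>\<^sup>+ x. (\<Sum>f\<in>F. G f (x, y)) \<partial>\<mu> y) \<le> (\<integral>\<^sup>+ x. ennreal (C\<^sup>2) \<partial>\<mu> y)"
        by (rule nn_integral_mono_AE)
      also have "\<dots> = ennreal (C\<^sup>2)" by (simp add: Py.emeasure_space_1)
      finally show ?case .
    qed
    have "(\<Sum>f\<in>F. \<integral>\<^sup>+ x. ennreal ((cmod (rel_conv \<pi> \<mu> K f x))\<^sup>2) \<partial>MX)
        = (\<Sum>f\<in>F. \<integral>\<^sup>+ x. G f (x, \<pi> x) \<partial>MX)" by (simp only: conv)
    also have "\<dots> = (\<integral>\<^sup>+ x. (\<Sum>f\<in>F. G f (x, \<pi> x)) \<partial>MX)"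
    proof (rule nn_integral_sum[symmetric])
      fix f assume "f \<in> F"
      then have [measurable]: "G f \<in> borel_measurable (MX \<Otimes>\<^sub>M MY)" using F Gm by auto
      show "(\<lambda>x. G f (x, \<pi> x)) \<in> borel_measurable MX" by measurable
    qed
    also have "\<dots> = (\<integral>\<^sup>+ y. \<integral>\<^sup>+ x. (\<Sum>f\<in>F. G f (x, y)) \<partial>\<mu> y \<partial>MY)"
      using disint_nn[OF assms(1) GFm] by simp
    also have "\<dots> \<le> (\<integral>\<^sup>+ y. ennreal (C\<^sup>2) \<partial>MY)"
      by (rule nn_integral_mono_AE[OF AEy])
    also have "\<dots> = ennreal (C\<^sup>2)" by (simp add: MY1)
    finally show "(\<Sum>f\<in>F. \<integral>\<^sup>+ x. ennreal ((cmod (rel_conv \<pi> \<mu> K f x))\<^sup>2) \<partial>MX) \<le> ennreal (C\<^sup>2)" .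
  qed
  then show ?thesis unfolding infinity_ennreal_def by (rule order.strict_trans1[OF _ ennreal_less_top])
qed

end
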